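(* Let $\bm G\in\{0,1\}^{n\times k}$ be a partition indicator matrix, $\bm\Omega\in[0,1]^{k\times k}$ symmetric, $\bm n_g=\bm G^\top\bm1$, $\bm N_g=\operatorname{diag}(\bm n_g)=\bm G^\top\bm G$, and assume all entries of $\bm\Omega\bm n_g$ are positive. Define the normalized affinity matrix $$\bm\Gamma=\bm N_g^{1/2}\operatorname{diag}(\bm\Omega\bm n_g)^{-1/2}\,\bm\Omega\,\operatorname{diag}(\bm\Omega\bm n_g)^{-1/2}\bm N_g^{1/2},$$ and let $\bm{\mathcal L}=\operatorname{diag}(\bm{\mathcal A}\bm1)^{-1/2}\bm{\mathcal A}\operatorname{diag}(\bm{\mathcal A}\bm1)^{-1/2}$ with $\bm{\mathcal A}=\bm G\bm\Omega\bm G^\top$. If $\bm u_i$ is an eigenvector of $\bm\Gamma$ with eigenvalue $\lambda_i$, then $\bm v_i=\bm G\bm N_g^{-1/2}\bm u_i$ is an eigenvector of $\bm{\mathcal L}$ with the same eigenvalue $\lambda_i$.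
   Context: A partition indicator matrix $\bm G$ has exactly one entry $1$ in each row and each column nonzero ($G_{ij}=1$ iff node $i$ is in group $j$). $\bm1$ is the all-ones vector and $\operatorname{diag}(\bm x)$ the diagonal matrix with diagonal $\bm x$. *)

theory Defs
  imports "HOL-Analysis.Analysis"
begin

definition diagm :: "real^'n \<Rightarrow> real^'n^'n" where
  "diagm x = (\<chi> i j. if i = j then x $ i else 0)"

definition partition_indicator :: "real^'k^'n \<Rightarrow> bool" where
  "partition_indicator G \<longleftrightarrow>
     (\<forall>i j. G $ i $ j = 0 \<or> G $ i $ j = 1) \<and>
     (\<forall>i. \<exists>!j. G $ i $ j = 1) \<and>
     (\<forall>j. \<exists>i. G $ i $ j \<noteq> 0)"

definition vec_sqrt :: "real^'n \<Rightarrow> real^'n" where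
  "vec_sqrt x = (\<chi> i. sqrt (x $ i))"

definition vec_inv_sqrt :: "real^'n \<Rightarrow> real^'n" where
  "vec_inv_sqrt x = (\<chi> i. inverse (sqrt (x $ i)))"

definition ones :: "real^'n" where "ones = (\<chi> i. 1)"

definition is_eigenpair :: "real^'n^'n \<Rightarrow> real \<Rightarrow> real^'n \<Rightarrow> bool" where
  "is_eigenpair M lam v \<longleftrightarrow> v \<noteq> 0 \<and> M *v v = lam *\<^sub>R v"

end

theory Submission
  imports Defs
begin

lemma diagm_v: "diagm x *v y = (\<chi> i. x$i * y$i)"
proof -
  have "(\<Sum>j\<in>UNIV. (if i = j then x$i else 0) * y$j) = x$i * y$i" for i
    by (simp add: if_distrib[where f="\<lambda>a. a * _"] cong: if_cong)
  then show ?thesis by (simp add: diagm_def matrix_vector_mult_def vec_eq_iff)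
qed

lemma TV: "(transpose M *v y)$j = (\<Sum>i\<in>UNIV. M$i$j * y$i)"
  by (simp add: matrix_vector_mult_def transpose_def mult.commute)

theorem lemmaA2:
  fixes G :: "real^'k^'n" and \<Omega> :: "real^'k^'k" and u :: "real^'k" and lam :: real
  assumes "partition_indicator G"
    and "\<forall>a b. 0 \<le> \<Omega> $ a $ b \<and> \<Omega> $ a $ b \<le> 1"
    and "transpose \<Omega> = \<Omega>"
    and "\<forall>a. (\<Omega> *v (transpose G *v ones)) $ a > 0"
    and "is_eigenpair
           (diagm (vec_sqrt (transpose G *v ones))
            ** diagm (vec_inv_sqrt (\<Omega> *v (transpose G *v ones)))
            ** \<Omega>
            ** diagm (vec_inv_sqrt (\<Omega> *v (transpose G *v ones)))
            ** diagm (vec_sqrt (transpose G *v ones))) lam u"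
  shows "is_eigenpair
           (diagm (vec_inv_sqrt ((G ** \<Omega> ** transpose G) *v ones))
            ** (G ** \<Omega> ** transpose G)
            ** diagm (vec_inv_sqrt ((G ** \<Omega> ** transpose G) *v ones)))
           lam (G *v (diagm (vec_inv_sqrt (transpose G *v ones)) *v u))"
proof -
  define g where "g i = (THE j. G$i$j = 1)" for i
  have Gg: "G$i$j = (if j = g i then 1 else 0)" for i j
  proof -
    have ex: "\<exists>!j. G$i$j = 1" using assms(1) unfolding partition_indicator_def by blast
    then have "G$i$(g i) = 1" unfolding g_def by (rule theI')
    moreover have "j \<noteq> g i \<Longrightarrow> G$i$j = 0"
      using ex \<open>G$i$(g i) = 1\<close> assms(1) unfolding partition_indicator_def by metis
    ultimately show ?thesis by auto
  qed
  define n where "n = transpose G *v ones"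
  have n_eq: "n$j = real (card {i. g i = j})" for j
    by (simp add: n_def matrix_vector_mult_def transpose_def ones_def Gg sum.If_cases eq_commute)
  have npos: "n$j > 0" for j
  proof -
    obtain i where "G$i$j \<noteq> 0" using assms(1) unfolding partition_indicator_def by blast
    then have "g i = j" using Gg[of i j] by (auto split: if_splits)
    then have "{i. g i = j} \<noteq> {}" by auto
    then show ?thesis unfolding n_eq by (simp add: card_gt_0_iff)
  qed
  have Gv: "(G *v x)$i = x$(g i)" for x i
  proof -
    have "(\<Sum>j\<in>UNIV. (if j = g i then 1 else 0) * x$j) = x$(g i)"
      by (simp add: if_distrib[where f="\<lambda>a. a * _"] cong: if_cong)
    then show ?thesis by (simp add: matrix_vector_mult_def Gg)
  qed
  have GTG: "transpose G *v (G *v x) = (\<chi> j. n$j * x$j)" for x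
  proof -
    have "(transpose G *v (G *v x))$j = n$j * x$j" for j
    proof -
      have "(transpose G *v (G *v x))$j = (\<Sum>i\<in>UNIV. G$i$j * x$(g i))"
        by (simp only: TV Gv)
      also have "\<dots> = (\<Sum>i\<in>UNIV. G$i$j * x$j)"
        by (rule sum.cong) (auto simp: Gg)
      also have "\<dots> = n$j * x$j"
        by (simp add: n_def matrix_vector_mult_def transpose_def ones_def sum_distrib_right)
      finally show ?thesis .
    qed
    then show ?thesis by (simp add: vec_eq_iff)
  qed
  define d where "d = \<Omega> *v n"
  define e where "e = vec_inv_sqrt d"
  define s where "s = vec_sqrt n"
  define r where "r = vec_inv_sqrt n"
  have dpos: "d$j > 0" for j using assms(4) by (simp add: d_def n_def)
  have A1: "(G ** \<Omega> ** transpose G) *v ones = G *v d"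
    by (simp only: d_def n_def matrix_vector_mul_assoc matrix_mul_assoc)
  have Ge: "vec_inv_sqrt (G *v d) = G *v e"
    by (simp add: vec_eq_iff vec_inv_sqrt_def e_def Gv)
  have hyp: "(\<chi> i. s$i * (e$i * (\<Omega> *v (\<chi> j. e$j * (s$j * u$j)))$i)) = lam *\<^sub>R u"
    and u0: "u \<noteq> 0"
    using assms(5) unfolding is_eigenpair_def
    by (simp_all add: matrix_vector_mul_assoc[symmetric] diagm_v s_def e_def n_def d_def)
  have hyp2: "e$i * (\<Omega> *v (\<chi> j. e$j * (s$j * u$j)))$i = lam * (r$i * u$i)" for i
  proof -
    have "s$i * (e$i * (\<Omega> *v (\<chi> j. e$j * (s$j * u$j)))$i) = lam * u$i"
      using hyp by (simp add: vec_eq_iff)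
    moreover have "s$i > 0" using npos by (simp add: s_def vec_sqrt_def)
    moreover have "r$i = 1 / s$i" by (simp add: r_def s_def vec_sqrt_def vec_inv_sqrt_def divide_inverse)
    ultimately have h: "s$i * (e$i * (\<Omega> *v (\<chi> j. e$j * (s$j * u$j)))$i) = lam * u$i" and rs: "r$i * s$i = 1" by simp_all
    have "e$i * (\<Omega> *v (\<chi> j. e$j * (s$j * u$j)))$i = (r$i * s$i) * (e$i * (\<Omega> *v (\<chi> j. e$j * (s$j * u$j)))$i)"
      using rs by simp
    also have "\<dots> = r$i * (lam * u$i)" using h by (simp only: mult.assoc)
    finally show ?thesis by simp
  qed
  have nr: "n$j * (e$j * (r$j * u$j)) = e$j * (s$j * u$j)" for j
  proof -
    have "n$j * r$j = s$j" using npos[of j]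
      by (simp add: r_def s_def vec_sqrt_def vec_inv_sqrt_def field_simps)
    then show ?thesis by (metis mult.assoc mult.left_commute)
  qed
  define w where "w = G *v (diagm r *v u)"
  have "(diagm (G *v e) ** (G ** \<Omega> ** transpose G) ** diagm (G *v e)) *v w
        = G *v (\<chi> i. e$i * (\<Omega> *v (\<chi> j. e$j * (s$j * u$j)))$i)"
  proof -
    have "(diagm (G *v e) ** (G ** \<Omega> ** transpose G) ** diagm (G *v e)) *v w
       = diagm (G *v e) *v (G *v (\<Omega> *v (transpose G *v (diagm (G *v e) *v w))))"
      by (simp add: matrix_vector_mul_assoc[symmetric])
    also have "diagm (G *v e) *v w = G *v (\<chi> j. e$j * (r$j * u$j))"
      by (simp add: w_def diagm_v vec_eq_iff Gv)
    also have "transpose G *v (G *v (\<chi> j. e$j * (r$j * u$j))) = (\<chi> j. e$j * (s$j * u$j))"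
      by (simp only: GTG vec_lambda_beta nr)
    finally show ?thesis by (simp add: diagm_v vec_eq_iff Gv)
  qed
  also have "\<dots> = lam *\<^sub>R w"
    by (simp add: hyp2 w_def vec_eq_iff Gv diagm_v)
  finally have eig: "(diagm (G *v e) ** (G ** \<Omega> ** transpose G) ** diagm (G *v e)) *v w = lam *\<^sub>R w" .
  have "w \<noteq> 0"
  proof -
    obtain b where ub: "u$b \<noteq> 0" using u0 by (auto simp: vec_eq_iff)
    obtain i where "G$i$b \<noteq> 0" using assms(1) unfolding partition_indicator_def by blast
    then have gi: "g i = b" using Gg[of i b] by (auto split: if_splits)
    have "r$b \<noteq> 0" using npos[of b] by (simp add: r_def vec_inv_sqrt_def)
    then have "w$i \<noteq> 0" using ub by (simp add: w_def Gv gi diagm_v)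
    then show ?thesis by auto
  qed
  then show ?thesis using eig unfolding is_eigenpair_def A1 Ge w_def r_def n_def by simp
qed

end
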